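(* Let $G$ be a $B_2$-EPG graph given with a representation in which every vertex is a Z-vertex, and let $X$ be a clique of $G$. For rows $a,b$ let $X_{ab}$ be the set of vertices of $X$ with index exactly $\{a,b\}$. If there are two rows $a,b$ such that neither the projection graph of $X_{ab}$ on $a$ nor the projection graph of $X_{ab}$ on $b$ is a clique, then $X$ is contained in (the vertex set of) a good graph of $G$.
   Context: A graph $G$ is a $B_k$-EPG graph if each vertex $u$ can be assigned a path $P_u$ in the planar orthogonal grid with at most $k$ bends such that $uv\in E(G)$ iff $P_u$ and $P_v$ share at least one grid edge (a representation); for $B_2$-EPG graphs one assumes w.l.o.g. every path has exactly two bends. A vertex $u$ intersects a row (column) if $P_u$ contains a grid edge of it; the index of $u$ is the set of rows it intersects. A Z-vertex intersects exactly two rows and one column. If $a$ is in the index of $u$, $P_u^a$ is the segment of row $a$ between the two points of row $a$ where $P_u$ stops or bends. Types: $\emptyset$, $\mathsf d$, $\mathsf u$. A typed interval on row $a$ is $[x\alpha, y\beta]$ with $\alpha\le\beta$ points of row $a$ and $x,y$ types; it is proper if $\alpha\neq\beta$, or $\alpha=\beta$, $x=y$ and $x\in\{\mathsf u,\mathsf d\}$. For typed intervals $t=[x\alpha,y\beta]$, $t'=[x'\alpha',y'\beta']$ on row $a$ and an endpoint $z\gamma\in\{x'\alpha',y'\beta'\}$ of $t'$, $t$ is coherent with $z\gamma$ if (i) $\gamma\in(\alpha,\beta)$ (open interval), or (ii) $z=\emptyset$ and $[\alpha,\beta]$ contains the grid edge of $[\alpha',\beta']$ incident to $\gamma$, or (iii)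 $z\neq\emptyset$ and $z\gamma\in\{x\alpha,y\beta\}$. $t$ contains $t'$ if $[\alpha',\beta']\subseteq[\alpha,\beta]$ and $t$ is coherent with both endpoints of $t'$. $t$ intersects $t'$ if $[\alpha,\beta]\cap[\alpha',\beta']$ contains a grid edge, or $t$ is coherent with an endpoint of $t'$, or $t'$ is coherent with an endpoint of $t$. The t-projection of $u$ on $a$ is $[x\alpha,y\beta]$ where $\alpha,\beta$ are the endpoints of $P_u^a$ and the type of an endpoint $\gamma$ is $\emptyset$ if $P_u$ ends at $\gamma$, $\mathsf d$ if $P_u$ bends downwards at $\gamma$, $\mathsf u$ if upwards. A vertex $u$ contains (intersects) a typed interval $t$ on $a$ if $a$ is in the index of $u$ and its t-projection on $a$ contains (intersects) $t$. The projection graph of a set $Y$ of vertices whose indices contain $a$ is the graph on $Y$ in which $u,v$ are adjacent iff their t-projections on $a$ intersect. A good graph of $G$ is an induced subgraph $H$ of one of the following forms: (I) there are two rows $a,b$ and proper typed intervals $t_a$ on $a$ and $t_b$ on $b$ such that $H$ is induced by all vertices $v$ that contain $t_a$, or contain $t_b$, or intersect both $t_a$ and $t_b$; (II) there are three rows $a,b,c$ and proper typed intervals $t_a,t_b,t_c$ on $a,b,c$ respectively such that $H$ is induced by all vertices $v$ that contain $t_a$, or contain $t_b$, or intersect $t_b$ and contain $t_c$. *)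

theory Defs
  imports Main
begin

text \<open>Grid points are pairs (x, y) of integers; row y is the horizontal line of
  points with second coordinate y, column x the vertical line with first coordinate x.
  "Downwards" means towards smaller y.\<close>

type_synonym point = "int \<times> int"

datatype gedge = HE int int | VE int int
  (* HE x y : edge between (x,y) and (x+1,y);  VE x y : edge between (x,y) and (x,y+1) *)

definition seg_edges :: "point \<Rightarrow> point \<Rightarrow> gedge set" where
  "seg_edges p q =
     (if snd p = snd q then {HE x (snd p) | x. min (fst p) (fst q) \<le> x \<and> x < max (fst p) (fst q)}
      else if fst p = fst q then {VE (fst p) y | y. min (snd p) (snd q) \<le> y \<and> y < max (snd p) (snd q)}
      else {})"

text \<open>A path with exactly two bends, given by its list of corner points
  (start, first bend, second bend, end).\<close>

definition horiz_seg :: "point list \<Rightarrow> nat \<Rightarrow> bool" where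
  "horiz_seg p i = (snd (p ! i) = snd (p ! Suc i))"

definition two_bend_path :: "point list \<Rightarrow> bool" where
  "two_bend_path p =
     (length p = 4 \<and>
      (\<forall>i<3. p ! i \<noteq> p ! Suc i \<and> (fst (p ! i) = fst (p ! Suc i) \<or> snd (p ! i) = snd (p ! Suc i))) \<and>
      (\<forall>i<2. horiz_seg p i \<longleftrightarrow> \<not> horiz_seg p (Suc i)))"

definition path_edges :: "point list \<Rightarrow> gedge set" where
  "path_edges p = (\<Union>i<3. seg_edges (p ! i) (p ! Suc i))"

definition B2_rep :: "'v set \<Rightarrow> ('v \<Rightarrow> 'v \<Rightarrow> bool) \<Rightarrow> ('v \<Rightarrow> point list) \<Rightarrow> bool" where
  "B2_rep V E P =
     ((\<forall>u\<in>V. two_bend_path (P u)) \<and>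
      (\<forall>u\<in>V. \<forall>v\<in>V. u \<noteq> v \<longrightarrow> (E u v \<longleftrightarrow> path_edges (P u) \<inter> path_edges (P v) \<noteq> {})))"

definition is_clique :: "'v set \<Rightarrow> ('v \<Rightarrow> 'v \<Rightarrow> bool) \<Rightarrow> 'v set \<Rightarrow> bool" where
  "is_clique V E X = (X \<subseteq> V \<and> (\<forall>u\<in>X. \<forall>v\<in>X. u \<noteq> v \<longrightarrow> E u v))"

definition index :: "point list \<Rightarrow> int set" where
  "index p = {snd (p ! i) | i. i < 3 \<and> horiz_seg p i}"

definition columns :: "point list \<Rightarrow> int set" where
  "columns p = {fst (p ! i) | i. i < 3 \<and> \<not> horiz_seg p i}"

definition Z_vertex :: "point list \<Rightarrow> bool" where
  "Z_vertex p = (card (index p) = 2 \<and> card (columns p) = 1)"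

text \<open>Types and typed intervals (x, alpha, y, beta), meaning [x alpha, y beta].\<close>

datatype etype = Emp | Dn | Up

type_synonym tint = "etype \<times> int \<times> etype \<times> int"

definition typed_interval :: "tint \<Rightarrow> bool" where
  "typed_interval t = (case t of (x, \<alpha>, y, \<beta>) \<Rightarrow> \<alpha> \<le> \<beta>)"

definition proper :: "tint \<Rightarrow> bool" where
  "proper t = (case t of (x, \<alpha>, y, \<beta>) \<Rightarrow>
      \<alpha> \<le> \<beta> \<and> (\<alpha> \<noteq> \<beta> \<or> (\<alpha> = \<beta> \<and> x = y \<and> x \<in> {Up, Dn})))"

text \<open>Coherence of t with the left (L = True) or right (L = False) endpoint of t'.
  The grid edge of [alpha', beta'] incident to the left endpoint is [alpha', alpha'+1],
  the one incident to the right endpoint is [beta'-1, beta'].\<close>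

definition coherent :: "tint \<Rightarrow> tint \<Rightarrow> bool \<Rightarrow> bool" where
  "coherent t t' L = (case t of (x, \<alpha>, y, \<beta>) \<Rightarrow> case t' of (x', \<alpha>', y', \<beta>') \<Rightarrow>
      (let z = (if L then x' else y'); \<gamma> = (if L then \<alpha>' else \<beta>');
           e = (if L then \<alpha>' else \<beta>' - 1)
       in (\<alpha> < \<gamma> \<and> \<gamma> < \<beta>)
          \<or> (z = Emp \<and> \<alpha> \<le> e \<and> e + 1 \<le> \<beta>)
          \<or> (z \<noteq> Emp \<and> ((z, \<gamma>) = (x, \<alpha>) \<or> (z, \<gamma>) = (y, \<beta>)))))"

definition tcontains :: "tint \<Rightarrow> tint \<Rightarrow> bool" where
  "tcontains t t' = (case t of (x, \<alpha>, y, \<beta>) \<Rightarrow> case t' of (x', \<alpha>', y', \<beta>') \<Rightarrow>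
      \<alpha> \<le> \<alpha>' \<and> \<beta>' \<le> \<beta> \<and> coherent t t' True \<and> coherent t t' False)"

definition tintersects :: "tint \<Rightarrow> tint \<Rightarrow> bool" where
  "tintersects t t' = (case t of (x, \<alpha>, y, \<beta>) \<Rightarrow> case t' of (x', \<alpha>', y', \<beta>') \<Rightarrow>
      max \<alpha> \<alpha>' < min \<beta> \<beta>'
      \<or> coherent t t' True \<or> coherent t t' False
      \<or> coherent t' t True \<or> coherent t' t False)"

definition bend_type :: "int \<Rightarrow> int \<Rightarrow> etype" where
  "bend_type a other = (if other < a then Dn else Up)"

definition mk_tint :: "etype \<Rightarrow> int \<Rightarrow> etype \<Rightarrow> int \<Rightarrow> tint" where
  "mk_tint x \<alpha> y \<beta> = (if \<alpha> \<le> \<beta> then (x, \<alpha>, y, \<beta>) else (y, \<beta>, x, \<alpha>))"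

definition seg_tproj :: "point list \<Rightarrow> nat \<Rightarrow> tint" where
  "seg_tproj p i =
     (let a = snd (p ! i);
          tl = (if i = 0 then Emp else bend_type a (snd (p ! (i - 1))));
          tr = (if Suc i = 3 then Emp else bend_type a (snd (p ! (i + 2))))
      in mk_tint tl (fst (p ! i)) tr (fst (p ! Suc i)))"

definition tproj :: "point list \<Rightarrow> int \<Rightarrow> tint" where
  "tproj p a = seg_tproj p (THE i. i < 3 \<and> horiz_seg p i \<and> snd (p ! i) = a)"

definition vcontains :: "('v \<Rightarrow> point list) \<Rightarrow> 'v \<Rightarrow> int \<Rightarrow> tint \<Rightarrow> bool" where
  "vcontains P u a t = (a \<in> index (P u) \<and> tcontains (tproj (P u) a) t)"

definition vintersects :: "('v \<Rightarrow> point list) \<Rightarrow> 'v \<Rightarrow> int \<Rightarrow> tint \<Rightarrow> bool" where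
  "vintersects P u a t = (a \<in> index (P u) \<and> tintersects (tproj (P u) a) t)"

definition proj_graph_clique :: "('v \<Rightarrow> point list) \<Rightarrow> int \<Rightarrow> 'v set \<Rightarrow> bool" where
  "proj_graph_clique P a Y =
     (\<forall>u\<in>Y. \<forall>v\<in>Y. u \<noteq> v \<longrightarrow> tintersects (tproj (P u) a) (tproj (P v) a))"

definition good_vertex_set :: "'v set \<Rightarrow> ('v \<Rightarrow> point list) \<Rightarrow> 'v set \<Rightarrow> bool" where
  "good_vertex_set V P S =
     ((\<exists>a b ta tb. a \<noteq> b \<and> proper ta \<and> proper tb \<and>
         S = {v \<in> V. vcontains P v a ta \<or> vcontains P v b tb \<or>
                     (vintersects P v a ta \<and> vintersects P v b tb)})
      \<or>
      (\<exists>a b c ta tb tc. distinct [a, b, c] \<and> proper ta \<and> proper tb \<and> proper tc \<and>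
         S = {v \<in> V. vcontains P v a ta \<or> vcontains P v b tb \<or>
                     (vintersects P v b tb \<and> vcontains P v c tc)}))"

end

theory Submission
  imports Defs
begin


lemma len4: "length p = 4 \<Longrightarrow> p = [p!0,p!1,p!2,p!3]"
  by (rule nth_equalityI) (auto simp: less_Suc_eq numeral_eq_Suc nth_Cons')
lemma lt3: "(i::nat) < 3 \<longleftrightarrow> i = 0 \<or> i = 1 \<or> i = 2" by auto

lemma zform:
  assumes "two_bend_path p" "Z_vertex p"
  shows "\<exists>x0 y1 c y2 x3. p = [(x0,y1),(c,y1),(c,y2),(x3,y2)] \<and> x0 \<noteq> c \<and> x3 \<noteq> c \<and> y1 \<noteq> y2"
proof -
  have l: "length p = 4" using assms(1) unfolding two_bend_path_def by auto
  obtain x0 y0 x1 y1 x2 y2 x3 y3 where pe: "p = [(x0,y0),(x1,y1),(x2,y2),(x3,y3)]"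
    using len4[OF l] by (metis surj_pair)
  have A: "\<forall>i<3. p ! i \<noteq> p ! Suc i \<and> (fst (p ! i) = fst (p ! Suc i) \<or> snd (p ! i) = snd (p ! Suc i))"
   and B: "\<forall>i<2. horiz_seg p i \<longleftrightarrow> \<not> horiz_seg p (Suc i)" using assms(1) unfolding two_bend_path_def by auto
  from A[rule_format, of 0] have a0: "(x0,y0) \<noteq> (x1,y1) \<and> (x0 = x1 \<or> y0 = y1)" by (simp add: pe)
  from A[rule_format, of 1] have a1: "(x1,y1) \<noteq> (x2,y2) \<and> (x1 = x2 \<or> y1 = y2)" by (simp add: pe)
  from A[rule_format, of 2] have a2: "(x2,y2) \<noteq> (x3,y3) \<and> (x2 = x3 \<or> y2 = y3)" by (simp add: pe numeral_eq_Suc)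
  from B[rule_format, of 0] have b0: "y0 = y1 \<longleftrightarrow> y1 \<noteq> y2" by (auto simp: pe horiz_seg_def)
  from B[rule_format, of 1] have b1: "y1 = y2 \<longleftrightarrow> y2 \<noteq> y3" by (auto simp: pe horiz_seg_def numeral_eq_Suc)
  have ix: "index p = {snd (p!i) | i. i = 0 \<and> horiz_seg p 0 \<or> i = 1 \<and> horiz_seg p 1 \<or> i = 2 \<and> horiz_seg p 2}"
    unfolding index_def lt3 by blast
  have c2: "card (index p) = 2" using assms(2) unfolding Z_vertex_def by auto
  show ?thesis
  proof (cases "y0 = y1")
    case True
    then show ?thesis using a0 a1 a2 b0 b1 pe by auto
  next
    case False
    then have "index p = {y1}" unfolding ix using b0 b1 by (auto simp: pe horiz_seg_def numeral_eq_Suc)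
    then show ?thesis using c2 by simp
  qed
qed

lemma l3set: "{..<(3::nat)} = {0,1,2}" by auto

lemma zexp:
  assumes pe: "p = [(x0,y1),(c,y1),(c,y2),(x3,y2)]" and ne: "x0 \<noteq> c" "x3 \<noteq> c" "y1 \<noteq> y2"
  shows "index p = {y1,y2}"
    and "tproj p y1 = mk_tint Emp x0 (bend_type y1 y2) c"
    and "tproj p y2 = mk_tint Emp x3 (bend_type y2 y1) c"
    and "HE z r \<in> path_edges p \<longleftrightarrow> (r = y1 \<and> min x0 c \<le> z \<and> z < max x0 c) \<or> (r = y2 \<and> min x3 c \<le> z \<and> z < max x3 c)"
    and "VE z y \<in> path_edges p \<longleftrightarrow> z = c \<and> min y1 y2 \<le> y \<and> y < max y1 y2"
proof -
  have h: "horiz_seg p 0" "\<not> horiz_seg p 1" "horiz_seg p 2"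
    using ne by (auto simp: pe horiz_seg_def numeral_eq_Suc)
  show "index p = {y1,y2}" unfolding index_def lt3 using h
    by (auto simp: pe numeral_eq_Suc intro: exI[where x=0] exI[where x="Suc (Suc 0)"])
  have "(THE i. i < 3 \<and> horiz_seg p i \<and> snd (p ! i) = y1) = 0"
  proof (rule the_equality)
    show "(0::nat) < 3 \<and> horiz_seg p 0 \<and> snd (p ! 0) = y1" using h by (simp add: pe numeral_2_eq_2)
    fix i assume as: "i < 3 \<and> horiz_seg p i \<and> snd (p ! i) = y1"
    then have "i = 0 \<or> i = 1 \<or> i = 2" by auto
    then show "i = 0" using as h ne by (auto simp: pe numeral_2_eq_2)
  qed
  then show "tproj p y1 = mk_tint Emp x0 (bend_type y1 y2) c"
    unfolding tproj_def seg_tproj_def by (simp add: pe numeral_eq_Suc)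
  have "(THE i. i < 3 \<and> horiz_seg p i \<and> snd (p ! i) = y2) = 2"
  proof (rule the_equality)
    show "(2::nat) < 3 \<and> horiz_seg p 2 \<and> snd (p ! 2) = y2" using h by (simp add: pe numeral_2_eq_2)
    fix i assume as: "i < 3 \<and> horiz_seg p i \<and> snd (p ! i) = y2"
    then have "i = 0 \<or> i = 1 \<or> i = 2" by auto
    then show "i = 2" using as h ne by (auto simp: pe numeral_2_eq_2)
  qed
  then show "tproj p y2 = mk_tint Emp x3 (bend_type y2 y1) c"
    unfolding tproj_def seg_tproj_def using ne by (simp add: pe numeral_eq_Suc mk_tint_def)
  have pe2: "path_edges p = seg_edges (x0,y1) (c,y1) \<union> seg_edges (c,y1) (c,y2) \<union> seg_edges (c,y2) (x3,y2)"
    unfolding path_edges_def l3set by (simp add: pe numeral_2_eq_2 Un_ac)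
  show "HE z r \<in> path_edges p \<longleftrightarrow> (r = y1 \<and> min x0 c \<le> z \<and> z < max x0 c) \<or> (r = y2 \<and> min x3 c \<le> z \<and> z < max x3 c)"
    unfolding pe2 seg_edges_def using ne by auto
  show "VE z y \<in> path_edges p \<longleftrightarrow> z = c \<and> min y1 y2 \<le> y \<and> y < max y1 y2"
    unfolding pe2 seg_edges_def using ne by auto
qed

definition colp :: "point list \<Rightarrow> int" where "colp p = fst (p!1)"
definition fr :: "point list \<Rightarrow> int \<Rightarrow> int" where
  "fr p r = (if r = snd (p!0) then fst (p!0) else fst (p!3))"
definition othr :: "point list \<Rightarrow> int \<Rightarrow> int" where
  "othr p r = (if r = snd (p!0) then snd (p!2) else snd (p!0))"

lemma zarm:
  assumes "two_bend_path p" "Z_vertex p" "r \<in> index p"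
  shows "index p = {r, othr p r}" "othr p r \<noteq> r" "fr p r \<noteq> colp p"
    "tproj p r = mk_tint Emp (fr p r) (bend_type r (othr p r)) (colp p)"
    "VE z y \<in> path_edges p \<longleftrightarrow> z = colp p \<and> min r (othr p r) \<le> y \<and> y < max r (othr p r)"
proof -
  obtain x0 y1 c y2 x3 where pe: "p = [(x0,y1),(c,y1),(c,y2),(x3,y2)]" and ne: "x0 \<noteq> c" "x3 \<noteq> c" "y1 \<noteq> y2"
    using zform[OF assms(1,2)] by blast
  note z = zexp[OF pe ne]
  have r: "r = y1 \<or> r = y2" using assms(3) z(1) by auto
  show "index p = {r, othr p r}" "othr p r \<noteq> r" "fr p r \<noteq> colp p"
    "tproj p r = mk_tint Emp (fr p r) (bend_type r (othr p r)) (colp p)"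
    "VE z y \<in> path_edges p \<longleftrightarrow> z = colp p \<and> min r (othr p r) \<le> y \<and> y < max r (othr p r)"
    using r ne z by (auto simp: pe colp_def fr_def othr_def numeral_eq_Suc)
qed

lemma zHE:
  assumes "two_bend_path p" "Z_vertex p"
  shows "HE z r \<in> path_edges p \<longleftrightarrow> r \<in> index p \<and> min (fr p r) (colp p) \<le> z \<and> z < max (fr p r) (colp p)"
proof -
  obtain x0 y1 c y2 x3 where pe: "p = [(x0,y1),(c,y1),(c,y2),(x3,y2)]" and ne: "x0 \<noteq> c" "x3 \<noteq> c" "y1 \<noteq> y2"
    using zform[OF assms(1,2)] by blast
  note z = zexp[OF pe ne]
  show ?thesis using ne z by (auto simp: pe colp_def fr_def othr_def numeral_eq_Suc)
qed

lemma zadj: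
  assumes "two_bend_path p" "Z_vertex p" "two_bend_path q" "Z_vertex q"
    "path_edges p \<inter> path_edges q \<noteq> {}"
  shows "(\<exists>r. r \<in> index p \<and> r \<in> index q \<and>
      max (min (fr p r) (colp p)) (min (fr q r) (colp q)) < min (max (fr p r) (colp p)) (max (fr q r) (colp q)))
    \<or> (colp p = colp q \<and> (\<forall>r. r \<in> index p \<longrightarrow> r \<in> index q \<longrightarrow> bend_type r (othr p r) = bend_type r (othr q r)))"
proof -
  obtain e where e: "e \<in> path_edges p" "e \<in> path_edges q" using assms(5) by blast
  show ?thesis
  proof (cases e)
    case (HE z r)
    then show ?thesis using e zHE[OF assms(1,2)] zHE[OF assms(3,4)] by auto
  next
    case (VE z y)
    have "colp p = colp q \<and> (\<forall>r. r \<in> index p \<longrightarrow> r \<in> index q \<longrightarrow> bend_type r (othr p r) = bend_type r (othr q r))"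
    proof (intro conjI allI impI)
      obtain r where "r \<in> index p" using assms(2) unfolding Z_vertex_def by (metis card.empty ex_in_conv zero_neq_numeral)
      then show "colp p = colp q" using e VE zarm(5)[OF assms(1,2)] assms(3,4)
        by (metis assms(4) card.empty ex_in_conv zarm(5) zero_neq_numeral Z_vertex_def)
    next
      fix r assume r: "r \<in> index p" "r \<in> index q"
      have "min r (othr p r) \<le> y \<and> y < max r (othr p r)" using e VE zarm(5)[OF assms(1,2) r(1)] by auto
      moreover have "min r (othr q r) \<le> y \<and> y < max r (othr q r)" using e VE zarm(5)[OF assms(3,4) r(2)] by auto
      ultimately show "bend_type r (othr p r) = bend_type r (othr q r)"
        using zarm(2)[OF assms(1,2) r(1)] zarm(2)[OF assms(3,4) r(2)]
        unfolding bend_type_def by (auto split: if_splits)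
    qed
    then show ?thesis by blast
  qed
qed



lemma mk_arm: "f \<noteq> c \<Longrightarrow> mk_tint Emp f t c = (if f < c then (Emp, f, t, c) else (t, c, Emp, f))"
  unfolding mk_tint_def by auto

lemma T1: "f \<noteq> c \<Longrightarrow> f' \<noteq> c \<Longrightarrow> t \<noteq> Emp \<Longrightarrow> tintersects (mk_tint Emp f t c) (mk_tint Emp f' t c)"
  unfolding mk_arm tintersects_def coherent_def by (auto simp: Let_def)

lemma T2: "f \<noteq> c \<Longrightarrow> f' \<noteq> c' \<Longrightarrow> max (min f c) (min f' c') < min (max f c) (max f' c')
   \<Longrightarrow> tintersects (mk_tint Emp f t c) (mk_tint Emp f' t' c')"
  unfolding mk_arm tintersects_def by auto

lemma gap_pair:
  fixes f1 c1 f2 c2 fw cw fw' cw' :: int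
  assumes "f1 \<noteq> c1" "f2 \<noteq> c2" "c1 \<noteq> c2" "fw \<noteq> cw" "fw' \<noteq> cw'"
    "\<not> (max (min f1 c1) (min f2 c2) < min (max f1 c1) (max f2 c2))"
    "max (min fw cw) (min f1 c1) < min (max fw cw) (max f1 c1) \<or> (cw = c1 \<and> tw = \<tau>)"
    "max (min fw cw) (min f2 c2) < min (max fw cw) (max f2 c2) \<or> (cw = c2 \<and> tw = \<tau>)"
    "max (min fw' cw') (min f1 c1) < min (max fw' cw') (max f1 c1) \<or> (cw' = c1 \<and> tw' = \<tau>)"
    "max (min fw' cw') (min f2 c2) < min (max fw' cw') (max f2 c2) \<or> (cw' = c2 \<and> tw' = \<tau>)"
  shows "min fw cw < max fw' cw' \<or> (min fw cw = max fw' cw' \<and> cw < fw \<and> tw = \<tau> \<and> fw' < cw' \<and> tw' = \<tau>)"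
  using assms by (smt (verit))

lemma contain_arm:
  fixes f c \<alpha> \<beta> :: int
  assumes "f \<noteq> c" "\<tau> \<noteq> Emp" "min f c \<le> \<alpha>" "\<beta> \<le> max f c"
    "\<alpha> < \<beta> \<or> (\<alpha> = \<beta> \<and> xL = \<tau> \<and> xR = \<tau>)" "xL = \<tau> \<or> xL = Emp" "xR = \<tau> \<or> xR = Emp"
    "min f c = \<alpha> \<and> xL = \<tau> \<longrightarrow> c < f \<and> t = \<tau>"
    "max f c = \<beta> \<and> xR = \<tau> \<longrightarrow> f < c \<and> t = \<tau>"
    "\<alpha> = max f c \<longrightarrow> f < c \<and> t = \<tau>"
    "\<beta> = min f c \<longrightarrow> c < f \<and> t = \<tau>"
  shows "tcontains (mk_tint Emp f t c) (xL, \<alpha>, xR, \<beta>)"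
proof (cases "f < c")
  case True
  then have e: "mk_tint Emp f t c = (Emp, f, t, c)" using mk_arm[OF assms(1)] by simp
  show ?thesis unfolding e tcontains_def coherent_def Let_def
    apply simp using assms True by (smt (verit))
next
  case False
  then have e: "mk_tint Emp f t c = (t, c, Emp, f)" using mk_arm[OF assms(1)] by simp
  show ?thesis unfolding e tcontains_def coherent_def Let_def
    apply simp using assms False by (smt (verit))
qed

lemma intersect_arm:
  fixes f c \<alpha> \<beta> :: int
  assumes "f \<noteq> c" "\<tau> \<noteq> Emp" "\<alpha> < \<beta> \<or> (\<alpha> = \<beta> \<and> xL = \<tau> \<and> xR = \<tau>)"
    "max f c \<le> \<alpha> \<longrightarrow> f < c \<and> max f c = \<alpha> \<and> xL = \<tau>"
    "\<beta> \<le> min f c \<longrightarrow> c < f \<and> min f c = \<beta> \<and> xR = \<tau>"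
  shows "tintersects (mk_tint Emp f \<tau> c) (xL, \<alpha>, xR, \<beta>)"
proof (cases "f < c")
  case True
  then have e: "mk_tint Emp f \<tau> c = (Emp, f, \<tau>, c)" using mk_arm[OF assms(1)] by simp
  show ?thesis unfolding e tintersects_def coherent_def Let_def
    apply simp using assms True by (smt (verit))
next
  case False
  then have e: "mk_tint Emp f \<tau> c = (\<tau>, c, Emp, f)" using mk_arm[OF assms(1)] by simp
  show ?thesis unfolding e tintersects_def coherent_def Let_def
    apply simp using assms False by (smt (verit))
qed



lemma side:
  fixes V :: "'v set" and E :: "'v \<Rightarrow> 'v \<Rightarrow> bool" and P :: "'v \<Rightarrow> point list"
    and X :: "'v set" and a b :: int
  assumes fin: "finite V" and rep: "B2_rep V E P" and Zv: "\<forall>u\<in>V. Z_vertex (P u)"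
    and cl: "is_clique V E X"
    and nc: "\<not> proj_graph_clique P a {u \<in> X. index (P u) = {a, b}}"
  shows "(\<forall>w\<in>X. a \<in> index (P w) \<or> b \<in> index (P w)) \<and>
    (\<exists>ta. proper ta \<and> (\<forall>w\<in>X. a \<in> index (P w) \<and> b \<notin> index (P w) \<longrightarrow> vcontains P w a ta)
                    \<and> (\<forall>w\<in>X. index (P w) = {a,b} \<longrightarrow> vintersects P w a ta))"
proof -
  have XV: "X \<subseteq> V" using cl unfolding is_clique_def by auto
  have tb: "\<And>u. u \<in> X \<Longrightarrow> two_bend_path (P u)" using rep XV unfolding B2_rep_def by auto
  have zv: "\<And>u. u \<in> X \<Longrightarrow> Z_vertex (P u)" using Zv XV by auto
  have adj: "\<And>u v. u \<in> X \<Longrightarrow> v \<in> X \<Longrightarrow> u \<noteq> v \<Longrightarrow> path_edges (P u) \<inter> path_edges (P v) \<noteq> {}"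
    using rep cl XV unfolding B2_rep_def is_clique_def by blast
  define Y where "Y = {u \<in> X. index (P u) = {a,b}}"
  obtain u1 v1 where uv: "u1 \<in> Y" "v1 \<in> Y" "u1 \<noteq> v1" "\<not> tintersects (tproj (P u1) a) (tproj (P v1) a)"
    using nc unfolding proj_graph_clique_def Y_def by blast
  have YX: "Y \<subseteq> X" unfolding Y_def by auto
  have ab: "a \<noteq> b"
  proof
    assume "a = b"
    then have "index (P u1) = {a}" using uv(1) unfolding Y_def by auto
    then show False using zv[of u1] uv(1) YX unfolding Z_vertex_def by auto
  qed
  define F where "F = (\<lambda>u. fr (P u) a)"
  define C where "C = (\<lambda>u. colp (P u))"
  define T where "T = (\<lambda>u. bend_type a (othr (P u) a))"
  define \<tau> where "\<tau> = bend_type a b"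
  have \<tau>ne: "\<tau> \<noteq> Emp" "\<tau> = Up \<or> \<tau> = Dn" unfolding \<tau>_def bend_type_def by auto
  have arm: "tproj (P u) a = mk_tint Emp (F u) (T u) (C u)" "F u \<noteq> C u" "T u \<noteq> Emp"
    if "u \<in> X" "a \<in> index (P u)" for u
    using zarm[OF tb[OF that(1)] zv[OF that(1)] that(2)] unfolding F_def C_def T_def bend_type_def by auto
  have Ya: "a \<in> index (P u)" "T u = \<tau>" if "u \<in> Y" for u
  proof -
    show ia: "a \<in> index (P u)" using that unfolding Y_def by auto
    have "u \<in> X" using that YX by auto
    note z = zarm[OF tb[OF this] zv[OF this] ia]
    have "othr (P u) a = b" using z(1,2) that ab unfolding Y_def by auto
    then show "T u = \<tau>" unfolding T_def \<tau>_def by simp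
  qed
  have u1v1: "C u1 \<noteq> C v1"
    "\<not> (max (min (F u1) (C u1)) (min (F v1) (C v1)) < min (max (F u1) (C u1)) (max (F v1) (C v1)))"
  proof -
    have X1: "u1 \<in> X" "v1 \<in> X" using uv YX by auto
    note a1 = arm[OF X1(1) Ya(1)[OF uv(1)]] and a2 = arm[OF X1(2) Ya(1)[OF uv(2)]]
    show "C u1 \<noteq> C v1"
    proof
      assume "C u1 = C v1"
      then have "tintersects (tproj (P u1) a) (tproj (P v1) a)"
        unfolding a1(1) a2(1) Ya(2)[OF uv(1)] Ya(2)[OF uv(2)]
        using T1[of "F u1" "C v1" "F v1" \<tau>] a1 a2 \<tau>ne by simp
      then show False using uv(4) by simp
    qed
    show "\<not> (max (min (F u1) (C u1)) (min (F v1) (C v1)) < min (max (F u1) (C u1)) (max (F v1) (C v1)))"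
      using T2[of "F u1" "C u1" "F v1" "C v1" "T u1" "T v1"] a1 a2 uv(4) by auto
  qed
  have meets: "(max (min (F w) (C w)) (min (F q) (C q)) < min (max (F w) (C w)) (max (F q) (C q)))
       \<or> (C w = C q \<and> T w = \<tau>)"
    if "w \<in> X" "a \<in> index (P w)" "b \<notin> index (P w)" "q \<in> Y" for w q
  proof -
    have qX: "q \<in> X" using that(4) YX by auto
    have wq: "w \<noteq> q" using that(3,4) unfolding Y_def by auto
    have iq: "index (P q) = {a,b}" using that(4) unfolding Y_def by auto
    note z = zadj[OF tb[OF that(1)] zv[OF that(1)] tb[OF qX] zv[OF qX] adj[OF that(1) qX wq]]
    have oq: "othr (P q) a = b" using zarm(1,2)[OF tb[OF qX] zv[OF qX] Ya(1)[OF that(4)]] iq ab by auto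
    show ?thesis
    proof (rule disjE[OF z])
      assume "\<exists>r. r \<in> index (P w) \<and> r \<in> index (P q) \<and>
          max (min (fr (P w) r) (colp (P w))) (min (fr (P q) r) (colp (P q))) <
          min (max (fr (P w) r) (colp (P w))) (max (fr (P q) r) (colp (P q)))"
      then obtain r where "r \<in> index (P w)" "r \<in> index (P q)" and
        o: "max (min (fr (P w) r) (colp (P w))) (min (fr (P q) r) (colp (P q))) <
          min (max (fr (P w) r) (colp (P w))) (max (fr (P q) r) (colp (P q)))" by blast
      then have "r = a" using iq that(3) by auto
      then show ?thesis using o unfolding F_def C_def by simp
    next
      assume "colp (P w) = colp (P q) \<and>
          (\<forall>r. r \<in> index (P w) \<longrightarrow> r \<in> index (P q) \<longrightarrow> bend_type r (othr (P w) r) = bend_type r (othr (P q) r))"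
      then show ?thesis using that(2) iq oq unfolding C_def T_def \<tau>_def by auto
    qed
  qed

  have step3: "\<forall>w\<in>X. a \<in> index (P w) \<or> b \<in> index (P w)"
  proof (rule ballI, rule ccontr)
    fix w assume wX: "w \<in> X" and n: "\<not> (a \<in> index (P w) \<or> b \<in> index (P w))"
    have col: "C w = C q" if "q \<in> Y" for q
    proof -
      have qX: "q \<in> X" using that YX by auto
      have wq: "w \<noteq> q" using n Ya(1)[OF that] by auto
      have iq: "index (P q) = {a,b}" using that unfolding Y_def by auto
      note z = zadj[OF tb[OF wX] zv[OF wX] tb[OF qX] zv[OF qX] adj[OF wX qX wq]]
      show ?thesis using z n iq unfolding C_def by auto
    qed
    show False using col[OF uv(1)] col[OF uv(2)] u1v1(1) by simp
  qed
  define Xa where "Xa = {w \<in> X. a \<in> index (P w) \<and> b \<notin> index (P w)}"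
  define lo where "lo = (\<lambda>u. min (F u) (C u))"
  define hi where "hi = (\<lambda>u. max (F u) (C u))"
  have Pw: "lo w < hi w' \<or> (lo w = hi w' \<and> C w < F w \<and> T w = \<tau> \<and> F w' < C w' \<and> T w' = \<tau>)"
    if "w \<in> Xa" "w' \<in> Xa" for w w'
  proof -
    have w: "w \<in> X" "a \<in> index (P w)" "b \<notin> index (P w)" using that(1) unfolding Xa_def by auto
    have w': "w' \<in> X" "a \<in> index (P w')" "b \<notin> index (P w')" using that(2) unfolding Xa_def by auto
    have X1: "u1 \<in> X" "v1 \<in> X" using uv YX by auto
    show ?thesis unfolding lo_def hi_def
      by (rule gap_pair[OF arm(2)[OF X1(1) Ya(1)[OF uv(1)]] arm(2)[OF X1(2) Ya(1)[OF uv(2)]] u1v1(1)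
          arm(2)[OF w(1,2)] arm(2)[OF w'(1,2)] u1v1(2)
          meets[OF w uv(1)] meets[OF w uv(2)] meets[OF w' uv(1)] meets[OF w' uv(2)]])
  qed
  define A where "A = {w \<in> X. a \<in> index (P w)}"
  have finA: "finite A" using fin XV unfolding A_def by (auto intro: finite_subset)
  have u1A: "u1 \<in> A" using uv(1) YX Ya(1) unfolding A_def by auto
  define m where "m = Min (lo ` A) - 1"
  define M where "M = Max (hi ` A) + 1"
  have mlo: "m < lo w" "lo w < hi w" "hi w < M" if "w \<in> A" for w
  proof -
    have "Min (lo ` A) \<le> lo w" using that finA by (intro Min_le) auto
    then show "m < lo w" unfolding m_def by simp
    have "hi w \<le> Max (hi ` A)" using that finA by (intro Max_ge) auto
    then show "hi w < M" unfolding M_def by simp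
    have "F w \<noteq> C w" using arm(2) that unfolding A_def by auto
    then show "lo w < hi w" unfolding lo_def hi_def by auto
  qed
  have XaA: "Xa \<subseteq> A" unfolding Xa_def A_def by auto
  have finXa: "finite Xa" using finA XaA by (rule finite_subset[rotated])
  define \<alpha> where "\<alpha> = Max (insert m (lo ` Xa))"
  define \<beta> where "\<beta> = Min (insert M (hi ` Xa))"
  have \<alpha>ge: "lo w \<le> \<alpha>" if "w \<in> Xa" for w unfolding \<alpha>_def using that finXa by auto
  have \<alpha>m: "m \<le> \<alpha>" unfolding \<alpha>_def using finXa by auto
  have \<alpha>in: "\<alpha> = m \<or> (\<exists>w\<in>Xa. \<alpha> = lo w)"
  proof -
    have "\<alpha> \<in> insert m (lo ` Xa)" unfolding \<alpha>_def using finXa by (intro Max_in) auto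
    then show ?thesis by auto
  qed
  have \<beta>le: "\<beta> \<le> hi w" if "w \<in> Xa" for w unfolding \<beta>_def using that finXa by auto
  have \<beta>M: "\<beta> \<le> M" unfolding \<beta>_def using finXa by auto
  have \<beta>in: "\<beta> = M \<or> (\<exists>w\<in>Xa. \<beta> = hi w)"
  proof -
    have "\<beta> \<in> insert M (hi ` Xa)" unfolding \<beta>_def using finXa by (intro Min_in) auto
    then show ?thesis by auto
  qed
  define tyL where "tyL = (if \<forall>w\<in>Xa. lo w = \<alpha> \<longrightarrow> C w < F w \<and> T w = \<tau> then \<tau> else Emp)"
  define tyR where "tyR = (if \<forall>w\<in>Xa. hi w = \<beta> \<longrightarrow> F w < C w \<and> T w = \<tau> then \<tau> else Emp)"
  have tyL: "tyL = \<tau> \<or> tyL = Emp" "tyL = \<tau> \<Longrightarrow> w \<in> Xa \<Longrightarrow> lo w = \<alpha> \<Longrightarrow> C w < F w \<and> T w = \<tau>" for w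
    unfolding tyL_def using \<tau>ne by (auto split: if_splits)
  have tyR: "tyR = \<tau> \<or> tyR = Emp" "tyR = \<tau> \<Longrightarrow> w \<in> Xa \<Longrightarrow> hi w = \<beta> \<Longrightarrow> F w < C w \<and> T w = \<tau>" for w
    unfolding tyR_def using \<tau>ne by (auto split: if_splits)
  have key: "\<alpha> < \<beta> \<or> (\<alpha> = \<beta> \<and> tyL = \<tau> \<and> tyR = \<tau>)"
  proof (cases "\<alpha> = m")
    case True
    show ?thesis
    proof (rule disjI1)
      from \<beta>in show "\<alpha> < \<beta>"
      proof
        assume "\<beta> = M" then show ?thesis using True mlo[OF u1A] by simp
      next
        assume "\<exists>w\<in>Xa. \<beta> = hi w"
        then obtain w where "w \<in> Xa" "\<beta> = hi w" by blast
        then show ?thesis using True mlo[of w] XaA by force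
      qed
    qed
  next
    case False
    then obtain wL where wL: "wL \<in> Xa" "\<alpha> = lo wL" using \<alpha>in by blast
    from \<beta>in show ?thesis
    proof
      assume "\<beta> = M" then show ?thesis using wL mlo[of wL] XaA by force
    next
      assume "\<exists>w\<in>Xa. \<beta> = hi w"
      then obtain wR where wR: "wR \<in> Xa" "\<beta> = hi wR" by blast
      show ?thesis
      proof (cases "\<alpha> < \<beta>")
        case True then show ?thesis by simp
      next
        case nlt: False
        have eq: "\<alpha> = \<beta>" using Pw[OF wL(1) wR(1)] wL wR nlt by auto
        have "\<forall>w\<in>Xa. lo w = \<alpha> \<longrightarrow> C w < F w \<and> T w = \<tau>"
        proof (intro ballI impI)
          fix w assume "w \<in> Xa" "lo w = \<alpha>"
          then show "C w < F w \<and> T w = \<tau>" using Pw[OF \<open>w \<in> Xa\<close> wR(1)] wR eq by auto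
        qed
        then have "tyL = \<tau>" unfolding tyL_def by simp
        moreover have "\<forall>w\<in>Xa. hi w = \<beta> \<longrightarrow> F w < C w \<and> T w = \<tau>"
        proof (intro ballI impI)
          fix w assume "w \<in> Xa" "hi w = \<beta>"
          then show "F w < C w \<and> T w = \<tau>" using Pw[OF wL(1) \<open>w \<in> Xa\<close>] wL eq by auto
        qed
        then have "tyR = \<tau>" unfolding tyR_def by simp
        ultimately show ?thesis using eq by simp
      qed
    qed
  qed
  define ta where "ta = (tyL, \<alpha>, tyR, \<beta>)"
  have prp: "proper ta" unfolding ta_def proper_def using key \<tau>ne by auto
  have cont: "vcontains P w a ta" if "w \<in> X" "a \<in> index (P w)" "b \<notin> index (P w)" for w
  proof -
    have wXa: "w \<in> Xa" unfolding Xa_def using that by auto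
    note aw = arm[OF that(1,2)]
    have "tcontains (mk_tint Emp (F w) (T w) (C w)) (tyL, \<alpha>, tyR, \<beta>)"
    proof (rule contain_arm[OF aw(2) \<tau>ne(1)])
      show "min (F w) (C w) \<le> \<alpha>" using \<alpha>ge[OF wXa] unfolding lo_def .
      show "\<beta> \<le> max (F w) (C w)" using \<beta>le[OF wXa] unfolding hi_def .
      show "\<alpha> < \<beta> \<or> \<alpha> = \<beta> \<and> tyL = \<tau> \<and> tyR = \<tau>" by (rule key)
      show "tyL = \<tau> \<or> tyL = Emp" "tyR = \<tau> \<or> tyR = Emp" using tyL(1) tyR(1) .
      show "min (F w) (C w) = \<alpha> \<and> tyL = \<tau> \<longrightarrow> C w < F w \<and> T w = \<tau>"
        using tyL(2)[OF _ wXa] unfolding lo_def by auto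
      show "max (F w) (C w) = \<beta> \<and> tyR = \<tau> \<longrightarrow> F w < C w \<and> T w = \<tau>"
        using tyR(2)[OF _ wXa] unfolding hi_def by auto
      show "\<alpha> = max (F w) (C w) \<longrightarrow> F w < C w \<and> T w = \<tau>"
        using tyR(2)[OF _ wXa] key \<alpha>ge[OF wXa] \<beta>le[OF wXa] unfolding hi_def by force
      show "\<beta> = min (F w) (C w) \<longrightarrow> C w < F w \<and> T w = \<tau>"
        using tyL(2)[OF _ wXa] key \<alpha>ge[OF wXa] \<beta>le[OF wXa] unfolding lo_def by force
    qed
    then show ?thesis unfolding vcontains_def ta_def using aw(1) that(2) by simp
  qed
  have inter: "vintersects P y a ta" if "y \<in> X" "index (P y) = {a,b}" for y
  proof -
    have yY: "y \<in> Y" unfolding Y_def using that by auto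
    have yA: "y \<in> A" unfolding A_def using Ya(1)[OF yY] that by auto
    note ay = arm[OF that(1) Ya(1)[OF yY]]
    have L: "max (F y) (C y) \<le> \<alpha> \<longrightarrow> F y < C y \<and> max (F y) (C y) = \<alpha> \<and> tyL = \<tau>"
    proof
      assume h: "max (F y) (C y) \<le> \<alpha>"
      then have "\<alpha> \<noteq> m" using mlo[OF yA] unfolding hi_def by auto
      then obtain wL where wL: "wL \<in> Xa" "\<alpha> = lo wL" using \<alpha>in by blast
      have cw: "C w = C y \<and> T w = \<tau>" if "w \<in> Xa" "lo w = \<alpha>" for w
      proof -
        have w: "w \<in> X" "a \<in> index (P w)" "b \<notin> index (P w)" using that(1) unfolding Xa_def by auto
        show ?thesis using meets[OF w yY] h that(2) unfolding lo_def by auto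
      qed
      have cyw: "C y = C wL" using cw[OF wL(1) wL(2)[symmetric]] by simp
      have 1: "C y \<le> max (F y) (C y)" by simp
      have 2: "lo wL \<le> C wL" unfolding lo_def by simp
      have eqs: "C y = max (F y) (C y)" "max (F y) (C y) = \<alpha>" using 1 2 cyw h wL(2) by linarith+
      then have "F y < C y" using ay(2) by linarith
      moreover have "tyL = \<tau>" unfolding tyL_def
      proof (subst if_P)
        show "\<forall>w\<in>Xa. lo w = \<alpha> \<longrightarrow> C w < F w \<and> T w = \<tau>"
        proof (intro ballI impI)
          fix w assume w: "w \<in> Xa" "lo w = \<alpha>"
          have "F w \<noteq> C w" using arm(2) w(1) unfolding Xa_def by auto
          then show "C w < F w \<and> T w = \<tau>" using cw[OF w] eqs w(2) unfolding lo_def by linarith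
        qed
      qed simp
      ultimately show "F y < C y \<and> max (F y) (C y) = \<alpha> \<and> tyL = \<tau>" using eqs by simp
    qed
    have R: "\<beta> \<le> min (F y) (C y) \<longrightarrow> C y < F y \<and> min (F y) (C y) = \<beta> \<and> tyR = \<tau>"
    proof
      assume h: "\<beta> \<le> min (F y) (C y)"
      then have "\<beta> \<noteq> M" using mlo[OF yA] unfolding lo_def by auto
      then obtain wR where wR: "wR \<in> Xa" "\<beta> = hi wR" using \<beta>in by blast
      have cw: "C w = C y \<and> T w = \<tau>" if "w \<in> Xa" "hi w = \<beta>" for w
      proof -
        have w: "w \<in> X" "a \<in> index (P w)" "b \<notin> index (P w)" using that(1) unfolding Xa_def by auto
        show ?thesis using meets[OF w yY] h that(2) unfolding hi_def by auto
      qed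
      have cyw: "C y = C wR" using cw[OF wR(1) wR(2)[symmetric]] by simp
      have 1: "min (F y) (C y) \<le> C y" by simp
      have 2: "C wR \<le> hi wR" unfolding hi_def by simp
      have eqs: "C y = min (F y) (C y)" "min (F y) (C y) = \<beta>" using 1 2 cyw h wR(2) by linarith+
      then have "C y < F y" using ay(2) by linarith
      moreover have "tyR = \<tau>" unfolding tyR_def
      proof (subst if_P)
        show "\<forall>w\<in>Xa. hi w = \<beta> \<longrightarrow> F w < C w \<and> T w = \<tau>"
        proof (intro ballI impI)
          fix w assume w: "w \<in> Xa" "hi w = \<beta>"
          have "F w \<noteq> C w" using arm(2) w(1) unfolding Xa_def by auto
          then show "F w < C w \<and> T w = \<tau>" using cw[OF w] eqs w(2) unfolding hi_def by linarith
        qed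
      qed simp
      ultimately show "C y < F y \<and> min (F y) (C y) = \<beta> \<and> tyR = \<tau>" using eqs by simp
    qed
    have "tintersects (mk_tint Emp (F y) \<tau> (C y)) (tyL, \<alpha>, tyR, \<beta>)"
      by (rule intersect_arm[OF ay(2) \<tau>ne(1) key L R])
    then show ?thesis unfolding vintersects_def ta_def using ay(1) Ya[OF yY] by simp
  qed
  show ?thesis using step3 prp cont inter by blast
qed

theorem lemma8:
  fixes V :: "'v set" and E :: "'v \<Rightarrow> 'v \<Rightarrow> bool" and P :: "'v \<Rightarrow> point list"
    and X :: "'v set" and a b :: int
  assumes "finite V"
    and "B2_rep V E P"
    and "\<forall>u\<in>V. Z_vertex (P u)"
    and "is_clique V E X"
    and "\<not> proj_graph_clique P a {u \<in> X. index (P u) = {a, b}}"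
    and "\<not> proj_graph_clique P b {u \<in> X. index (P u) = {a, b}}"
  shows "\<exists>S. good_vertex_set V P S \<and> X \<subseteq> S"
proof -
  have Yab: "{u \<in> X. index (P u) = {b, a}} = {u \<in> X. index (P u) = {a, b}}" by (auto simp: insert_commute)
  obtain ta where ta: "proper ta" "\<forall>w\<in>X. a \<in> index (P w) \<and> b \<notin> index (P w) \<longrightarrow> vcontains P w a ta"
      "\<forall>w\<in>X. index (P w) = {a,b} \<longrightarrow> vintersects P w a ta" and st: "\<forall>w\<in>X. a \<in> index (P w) \<or> b \<in> index (P w)"
    using side[OF assms(1-5)] by blast
  obtain tb where tb: "proper tb" "\<forall>w\<in>X. b \<in> index (P w) \<and> a \<notin> index (P w) \<longrightarrow> vcontains P w b tb"
      "\<forall>w\<in>X. index (P w) = {b,a} \<longrightarrow> vintersects P w b tb"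
  proof -
    have "\<not> proj_graph_clique P b {u \<in> X. index (P u) = {b, a}}" using assms(6) unfolding Yab .
    from side[OF assms(1-4) this] show ?thesis using that by blast
  qed
  have XV: "X \<subseteq> V" using assms(4) unfolding is_clique_def by auto
  obtain u where u: "u \<in> X" "index (P u) = {a,b}" using assms(5) unfolding proj_graph_clique_def by blast
  have ab: "a \<noteq> b"
  proof
    assume "a = b"
    then have "index (P u) = {a}" using u by auto
    moreover have "u \<in> V" using u XV by auto
    then have "card (index (P u)) = 2" using assms(3) unfolding Z_vertex_def by blast
    ultimately show False by simp
  qed
  define S where "S = {v \<in> V. vcontains P v a ta \<or> vcontains P v b tb \<or> (vintersects P v a ta \<and> vintersects P v b tb)}"
  have "good_vertex_set V P S" unfolding good_vertex_set_def S_def using ab ta(1) tb(1) by blast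
  moreover have "X \<subseteq> S"
  proof
    fix w assume w: "w \<in> X"
    have c2: "card (index (P w)) = 2" using assms(3) w XV unfolding Z_vertex_def by auto
    have fi: "finite (index (P w))" using c2 by (metis card.infinite zero_neq_numeral)
    show "w \<in> S"
    proof (cases "a \<in> index (P w) \<and> b \<in> index (P w)")
      case True
      then have "{a,b} \<subseteq> index (P w)" by auto
      moreover have "card {a,b} = 2" using ab by simp
      ultimately have "index (P w) = {a,b}" using c2 fi by (metis card_subset_eq)
      then show ?thesis unfolding S_def using w XV ta(3) tb(3) by (auto simp: insert_commute)
    next
      case False
      then show ?thesis unfolding S_def using w XV ta(2) tb(2) st by blast
    qed
  qed
  ultimately show ?thesis by blast
qed


end
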